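(* For every finite nonempty poset $P$, $h(P)-1\le e(P)\le d(P)$. Moreover, if $P$ has a smallest and a largest element, then $e(P)=d(P)$.
   Context: An injective map $f$ from a poset $P$ to a poset $Q$ is a weak embedding if $p\le q$ implies $f(p)\le f(q)$. $B_n$ is the Boolean lattice of all subsets of $\{1,\dots,n\}$ ordered by inclusion; its $k$-th level is the family of $k$-element subsets. $d(P)$ is the smallest integer $d$ such that $P$ weakly embeds into $B_d$. $e(P)$ is the largest integer $e$ such that for every $n$ the union of any $e$ consecutive levels of $B_n$ admits no weak embedding of $P$. $h(P)$ is the number of elements of a longest chain of $P$. *)

theory Defs
  imports Main
begin

text \<open>A poset is a carrier set A with an order relation r satisfying partial_order_on A r.
  The Boolean lattice B_n is Pow {1..n} ordered by inclusion.\<close>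

definition weak_embedding :: "'a set \<Rightarrow> 'a rel \<Rightarrow> ('a \<Rightarrow> nat set) \<Rightarrow> nat set set \<Rightarrow> bool" where
  "weak_embedding A r f Q \<longleftrightarrow>
     inj_on f A \<and> f ` A \<subseteq> Q \<and> (\<forall>p\<in>A. \<forall>q\<in>A. (p, q) \<in> r \<longrightarrow> f p \<subseteq> f q)"

definition boolean_lattice :: "nat \<Rightarrow> nat set set" where
  "boolean_lattice n = Pow {1..n}"

definition consec_levels :: "nat \<Rightarrow> nat \<Rightarrow> nat \<Rightarrow> nat set set" where
  "consec_levels n k e = {S \<in> boolean_lattice n. k \<le> card S \<and> card S < k + e}"

definition dim_d :: "'a set \<Rightarrow> 'a rel \<Rightarrow> nat" where
  "dim_d A r = (LEAST d. \<exists>f. weak_embedding A r f (boolean_lattice d))"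

definition levels_e :: "'a set \<Rightarrow> 'a rel \<Rightarrow> nat" where
  "levels_e A r = (GREATEST e. \<forall>n k. k + e \<le> n + 1 \<longrightarrow>
       \<not> (\<exists>f. weak_embedding A r f (consec_levels n k e)))"

definition is_chain :: "'a set \<Rightarrow> 'a rel \<Rightarrow> 'a set \<Rightarrow> bool" where
  "is_chain A r C \<longleftrightarrow> C \<subseteq> A \<and> (\<forall>x\<in>C. \<forall>y\<in>C. (x, y) \<in> r \<or> (y, x) \<in> r)"

definition height_h :: "'a set \<Rightarrow> 'a rel \<Rightarrow> nat" where
  "height_h A r = Max {card C | C. is_chain A r C}"

end

theory Submission
  imports Defs
begin

lemma inj_into_interval:
  assumes "finite M"
  shows "\<exists>g. inj_on g M \<and> g ` M \<subseteq> {1..card M}"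
proof -
  obtain h where h: "bij_betw h M {0..<card M}" using ex_bij_betw_finite_nat[OF assms] by blast
  have "inj_on (\<lambda>x. Suc (h x)) M" using bij_betw_imp_inj_on[OF h] by (simp add: inj_on_def)
  moreover have "\<forall>x\<in>M. h x < card M" using bij_betw_apply[OF h] by auto
  then have "(\<lambda>x. Suc (h x)) ` M \<subseteq> {1..card M}" by (auto simp: Suc_le_eq)
  ultimately show ?thesis by blast
qed

lemma embed_exists:
  assumes po: "partial_order_on A r" and fin: "finite A"
  shows "\<exists>f. weak_embedding A r f (boolean_lattice (card A))"
proof -
  obtain g where g: "inj_on g A" "g ` A \<subseteq> {1..card A}" using inj_into_interval[OF fin] by blast
  define f where "f p = g ` {q\<in>A. (q,p)\<in>r}" for p
  have refl: "\<And>x. x \<in> A \<Longrightarrow> (x,x)\<in>r" using po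
    by (auto simp: partial_order_on_def preorder_on_def refl_on_def)
  have tr: "trans r" using po by (auto simp: partial_order_on_def preorder_on_def)
  have as: "antisym r" using po by (auto simp: partial_order_on_def)
  have "inj_on f A"
  proof (rule inj_onI)
    fix x y assume x: "x\<in>A" and y: "y\<in>A" and e: "f x = f y"
    have "g x \<in> f y" using e x refl[OF x] unfolding f_def by auto
    then obtain q where "q\<in>A" "(q,y)\<in>r" "g x = g q" unfolding f_def by auto
    then have xy: "(x,y)\<in>r" using g(1) x by (metis inj_onD)
    have "g y \<in> f x" using e y refl[OF y] unfolding f_def by auto
    then obtain q' where "q'\<in>A" "(q',x)\<in>r" "g y = g q'" unfolding f_def by auto
    then have "(y,x)\<in>r" using g(1) y by (metis inj_onD)
    with xy as show "x = y" by (auto simp: antisym_def)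
  qed
  moreover have "f ` A \<subseteq> boolean_lattice (card A)"
    using g(2) unfolding f_def boolean_lattice_def by auto
  moreover have "\<forall>p\<in>A. \<forall>q\<in>A. (p, q) \<in> r \<longrightarrow> f p \<subseteq> f q"
    using tr unfolding f_def by (auto dest: transD)
  ultimately show ?thesis unfolding weak_embedding_def by blast
qed

definition Pe :: "'a set \<Rightarrow> 'a rel \<Rightarrow> nat \<Rightarrow> bool" where
  "Pe A r e = (\<forall>n k. k + e \<le> n + 1 \<longrightarrow> \<not> (\<exists>f. weak_embedding A r f (consec_levels n k e)))"

lemma dim_ex:
  assumes po: "partial_order_on A r" and fin: "finite A"
  shows "\<exists>f. weak_embedding A r f (boolean_lattice (dim_d A r))"
  unfolding dim_d_def by (rule LeastI_ex) (use embed_exists[OF po fin] in blast)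

lemma Pe_bound:
  assumes po: "partial_order_on A r" and fin: "finite A" and P: "Pe A r e"
  shows "e \<le> dim_d A r"
proof (rule ccontr)
  assume "\<not> e \<le> dim_d A r"
  then have lt: "dim_d A r < e" by simp
  obtain f where f: "weak_embedding A r f (boolean_lattice (dim_d A r))" using dim_ex[OF po fin] by blast
  have "boolean_lattice (dim_d A r) \<subseteq> consec_levels (e-1) 0 e"
  proof
    fix S assume "S \<in> boolean_lattice (dim_d A r)"
    then have S: "S \<subseteq> {1..dim_d A r}" by (simp add: boolean_lattice_def)
    have S': "S \<subseteq> {1..e-1}"
    proof
      fix x assume "x\<in>S"
      with S have "1\<le>x" "x \<le> dim_d A r" by auto
      with lt show "x \<in> {1..e-1}" by simp
    qed
    have "card S \<le> card {1..e-1}" by (rule card_mono[OF _ S']) simp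
    then have "card S < e" using lt by simp
    then show "S \<in> consec_levels (e-1) 0 e" using S' by (simp add: consec_levels_def boolean_lattice_def)
  qed
  then have "weak_embedding A r f (consec_levels (e-1) 0 e)" using f unfolding weak_embedding_def by blast
  moreover have "0 + e \<le> (e-1) + 1" by simp
  ultimately show False using P unfolding Pe_def by blast
qed

lemma levels_e_eq: "levels_e A r = (GREATEST e. Pe A r e)"
  unfolding levels_e_def Pe_def by simp

lemma le_levels:
  assumes po: "partial_order_on A r" and fin: "finite A" and P: "Pe A r e"
  shows "e \<le> levels_e A r"
  unfolding levels_e_eq by (rule Greatest_le_nat[of "Pe A r" e, OF P]) (use Pe_bound[OF po fin] in blast)

lemma levels_le:
  assumes po: "partial_order_on A r" and fin: "finite A" and ne: "A \<noteq> {}"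
  shows "levels_e A r \<le> dim_d A r"
proof -
  have P0: "Pe A r 0" using ne unfolding Pe_def weak_embedding_def consec_levels_def by auto
  have "Pe A r (levels_e A r)" unfolding levels_e_eq
    by (rule GreatestI_nat[of "Pe A r" 0, OF P0]) (use Pe_bound[OF po fin] in blast)
  then show ?thesis using Pe_bound[OF po fin] by blast
qed

lemma height_part:
  assumes po: "partial_order_on A r" and fin: "finite A" and ne: "A \<noteq> {}"
  shows "height_h A r - 1 \<le> levels_e A r"
proof -
  have fs: "finite {card C | C. is_chain A r C}"
  proof -
    have "{card C | C. is_chain A r C} \<subseteq> card ` Pow A" by (auto simp: is_chain_def)
    then show ?thesis using fin by (meson finite_Pow_iff finite_imageI finite_subset)
  qed
  have "is_chain A r {}" by (simp add: is_chain_def)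
  then have nes: "{card C | C. is_chain A r C} \<noteq> {}" by blast
  have "height_h A r \<in> {card C | C. is_chain A r C}"
    unfolding height_h_def using Max_in[OF fs nes] .
  then obtain C where C: "is_chain A r C" and hC: "card C = height_h A r" by force
  have "Pe A r (height_h A r - 1)"
    unfolding Pe_def
  proof (intro allI impI notI)
    fix n k assume "k + (height_h A r - 1) \<le> n + 1"
      and "\<exists>f. weak_embedding A r f (consec_levels n k (height_h A r - 1))"
    then obtain f where f: "weak_embedding A r f (consec_levels n k (height_h A r - 1))" by blast
    have CA: "C \<subseteq> A" using C by (simp add: is_chain_def)
    have finC: "finite C" using CA fin finite_subset by blast
    have Cne: "C \<noteq> {}"
    proof
      assume "C = {}"
      then have "height_h A r = 0" using hC by simp
      then have "consec_levels n k (height_h A r - 1) = {}" by (simp add: consec_levels_def)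
      then show False using f ne unfolding weak_embedding_def by blast
    qed
    have inj: "inj_on (\<lambda>x. card (f x)) C"
    proof (rule inj_onI)
      fix x y assume x: "x\<in>C" and y: "y\<in>C" and e: "card (f x) = card (f y)"
      have fxfin: "finite (f x)" "finite (f y)" using f x y CA
        unfolding weak_embedding_def consec_levels_def boolean_lattice_def
        by (auto intro: finite_subset)
      have rr: "(x,y)\<in>r \<or> (y,x)\<in>r" using C x y unfolding is_chain_def by blast
      have mm: "\<forall>p\<in>A. \<forall>q\<in>A. (p, q) \<in> r \<longrightarrow> f p \<subseteq> f q" using f unfolding weak_embedding_def by blast
      have xA: "x\<in>A" "y\<in>A" using x y CA by auto
      have "f x \<subseteq> f y \<or> f y \<subseteq> f x" using rr mm xA by auto
      then have "f x = f y"
      proof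
        assume "f x \<subseteq> f y" then show ?thesis using card_subset_eq[OF fxfin(2)] e by simp
      next
        assume "f y \<subseteq> f x" then show ?thesis using card_subset_eq[OF fxfin(1)] e by metis
      qed
      moreover have "inj_on f A" using f unfolding weak_embedding_def by blast
      ultimately show "x = y" using x y CA by (meson inj_onD subsetD)
    qed
    have "(\<lambda>x. card (f x)) ` C \<subseteq> {k..<k + (height_h A r - 1)}"
    proof
      fix z assume "z \<in> (\<lambda>x. card (f x)) ` C"
      then obtain x where x: "x\<in>C" "z = card (f x)" by blast
      have "f x \<in> consec_levels n k (height_h A r - 1)" using f x(1) CA unfolding weak_embedding_def by blast
      then show "z \<in> {k..<k + (height_h A r - 1)}" using x(2) unfolding consec_levels_def by simp
    qed
    then have "card ((\<lambda>x. card (f x)) ` C) \<le> card {k..<k + (height_h A r - 1)}"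
      by (intro card_mono) auto
    then have "card ((\<lambda>x. card (f x)) ` C) \<le> height_h A r - 1" by simp
    then have "card C \<le> height_h A r - 1" using card_image[OF inj] by simp
    moreover have "card C > 0" using finC Cne by auto
    ultimately show False using hC by simp
  qed
  then show ?thesis using le_levels[OF po fin] by blast
qed

lemma bounded_part:
  assumes po: "partial_order_on A r" and fin: "finite A"
    and b: "b\<in>A" "\<forall>x\<in>A. (b, x) \<in> r" and t: "t\<in>A" "\<forall>x\<in>A. (x, t) \<in> r"
  shows "Pe A r (dim_d A r)"
  unfolding Pe_def
proof (intro allI impI notI)
  fix n k assume "k + dim_d A r \<le> n + 1"
    and "\<exists>f. weak_embedding A r f (consec_levels n k (dim_d A r))"
  then obtain f where f: "weak_embedding A r f (consec_levels n k (dim_d A r))" by blast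
  let ?S = "f b" and ?T = "f t"
  have inS: "\<And>x. x\<in>A \<Longrightarrow> ?S \<subseteq> f x \<and> f x \<subseteq> ?T" using f b t unfolding weak_embedding_def by blast
  have Tfin: "finite ?T" using f t unfolding weak_embedding_def consec_levels_def boolean_lattice_def
    by (auto intro: finite_subset)
  have cS: "k \<le> card ?S" and cT: "card ?T < k + dim_d A r"
    using f b t unfolding weak_embedding_def consec_levels_def by auto
  have ST: "?S \<subseteq> ?T" using inS b by blast
  have cm: "card (?T - ?S) < dim_d A r"
    using card_Diff_subset[OF finite_subset[OF ST Tfin] ST] cS cT card_mono[OF Tfin ST] by simp
  obtain g where g: "inj_on g (?T - ?S)" "g ` (?T - ?S) \<subseteq> {1..card (?T - ?S)}"
    using inj_into_interval[of "?T - ?S"] Tfin by blast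
  define F where "F x = g ` (f x - ?S)" for x
  have "weak_embedding A r F (boolean_lattice (card (?T - ?S)))"
    unfolding weak_embedding_def
  proof (intro conjI)
    show "inj_on F A"
    proof (rule inj_onI)
      fix x y assume x: "x\<in>A" and y: "y\<in>A" and e: "F x = F y"
      have s1: "f x - ?S \<subseteq> ?T - ?S" using inS[OF x] by auto
      have s2: "f y - ?S \<subseteq> ?T - ?S" using inS[OF y] by auto
      have "f x - ?S = f y - ?S"
        using inj_on_image_eq_iff[OF g(1) s1 s2] e unfolding F_def by simp
      then have "f x = f y" using inS[OF x] inS[OF y] by blast
      then show "x = y" using f x y unfolding weak_embedding_def by (meson inj_onD)
    qed
    show "F ` A \<subseteq> boolean_lattice (card (?T - ?S))"
    proof
      fix X assume "X \<in> F ` A"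
      then obtain x where x: "x\<in>A" "X = F x" by blast
      have "f x - ?S \<subseteq> ?T - ?S" using inS[OF x(1)] by auto
      then have "X \<subseteq> g ` (?T - ?S)" unfolding x(2) F_def by (rule image_mono)
      then show "X \<in> boolean_lattice (card (?T - ?S))" using g(2) unfolding boolean_lattice_def by auto
    qed
    have m: "\<forall>p\<in>A. \<forall>q\<in>A. (p, q) \<in> r \<longrightarrow> f p \<subseteq> f q" using f unfolding weak_embedding_def by blast
    show "\<forall>p\<in>A. \<forall>q\<in>A. (p, q) \<in> r \<longrightarrow> F p \<subseteq> F q"
    proof (intro ballI impI)
      fix p q assume "p\<in>A" "q\<in>A" "(p,q)\<in>r"
      then have "f p - ?S \<subseteq> f q - ?S" using m by blast
      then show "F p \<subseteq> F q" unfolding F_def by (rule image_mono)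
    qed
  qed
  then have "dim_d A r \<le> card (?T - ?S)" unfolding dim_d_def by (intro Least_le) blast
  with cm show False by simp
qed

theorem mainTheorem3:
  fixes A :: "'a set" and r :: "'a rel"
  assumes "partial_order_on A r" and "finite A" and "A \<noteq> {}"
  shows "height_h A r - 1 \<le> levels_e A r \<and> levels_e A r \<le> dim_d A r \<and>
         ((\<exists>b\<in>A. \<forall>x\<in>A. (b, x) \<in> r) \<longrightarrow> (\<exists>t\<in>A. \<forall>x\<in>A. (x, t) \<in> r) \<longrightarrow>
         levels_e A r = dim_d A r)"
proof (intro conjI impI)
  show "height_h A r - 1 \<le> levels_e A r" using height_part[OF assms] .
  show "levels_e A r \<le> dim_d A r" using levels_le[OF assms] .
  assume "\<exists>b\<in>A. \<forall>x\<in>A. (b, x) \<in> r" "\<exists>t\<in>A. \<forall>x\<in>A. (x, t) \<in> r"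
  then obtain b t where "b\<in>A" "\<forall>x\<in>A. (b, x) \<in> r" "t\<in>A" "\<forall>x\<in>A. (x, t) \<in> r" by blast
  from bounded_part[OF assms(1,2) this] have "dim_d A r \<le> levels_e A r"
    using le_levels[OF assms(1,2)] by blast
  then show "levels_e A r = dim_d A r" using levels_le[OF assms] by simp
qed

end
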